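(* Let $U,V$ be Banach spaces, $L=L(V,U)$ the space of bounded linear maps with operator norm, $T>0$, $\alpha,\gamma\in(0,1]$ with $\alpha+\gamma>1$, and $\delta>0$. Let $F:[0,T]\times C^{\alpha}([0,T],U)\to L$ be $\delta$-non-anticipating and such that for each $Z\in C^{\alpha}([0,T],U)$ the map $t\mapsto F(t,Z)$ is $\gamma$-Hölder continuous. Let $X\in C^{\alpha}([0,T],V)$. Then for each $y_0\in U$ there is a unique $Y\in C^{\alpha}([0,T],U)$ such that $$Y_t=y_0+\int_0^tF(u,Y)\,dX_u,\qquad t\in[0,T],$$ where the integral is a Young integral.
   Context: $C^{\alpha}([0,T],U)$ denotes the $\alpha$-Hölder continuous paths. For $Y\in C([0,T],U)$ and $r\in[0,T]$, $\mathcal{Y}_r\in C([0,T],U)$ is defined by $\mathcal{Y}_r(x):=Y_{r\wedge x}$. $F$ is $\delta$-non-anticipating if $F(t,Y)=F(t,\mathcal{Y}_{(t-\delta)_+})$ for all $Y$ and all $t\in[0,T]$, where $(a)_+=\max(a,0)$. Young integral: if $W\in C^{\gamma}([a,b],L)$ and $X\in C^{\alpha}([a,b],V)$ with $\alpha+\gamma>1$, $\int_a^bW_u\,dX_u$ is the limit of Riemann sums $\sum_iW_{s_i}(X_{s_{i+1}}-X_{s_i})$ over partitions of $[a,b]$ as the mesh tends to $0$. *)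

theory Defs
  imports "HOL-Analysis.Analysis"
begin

definition holder_on :: "real \<Rightarrow> real \<Rightarrow> (real \<Rightarrow> 'a::real_normed_vector) \<Rightarrow> bool" where
  "holder_on \<alpha> T f \<longleftrightarrow> (\<exists>C. \<forall>s\<in>{0..T}. \<forall>t\<in>{0..T}. norm (f t - f s) \<le> C * \<bar>t - s\<bar> powr \<alpha>)"

text \<open>Elements of C^alpha([0,T],U), represented as functions on the reals that are
  alpha-Hoelder on [0,T] and constant-extended outside [0,T] (so that a path is
  determined by its values on [0,T]).\<close>
definition holder_path :: "real \<Rightarrow> real \<Rightarrow> (real \<Rightarrow> 'a::real_normed_vector) \<Rightarrow> bool" where
  "holder_path \<alpha> T f \<longleftrightarrow> holder_on \<alpha> T f \<and> (\<forall>x. f x = f (max 0 (min T x)))"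

definition stopped :: "(real \<Rightarrow> 'a) \<Rightarrow> real \<Rightarrow> real \<Rightarrow> 'a" where
  "stopped Y r = (\<lambda>x. Y (min r x))"

definition non_anticipating ::
  "real \<Rightarrow> real \<Rightarrow> real \<Rightarrow> (real \<Rightarrow> (real \<Rightarrow> 'u::real_normed_vector) \<Rightarrow> 'b) \<Rightarrow> bool" where
  "non_anticipating \<alpha> T \<delta> F \<longleftrightarrow>
     (\<forall>t\<in>{0..T}. \<forall>Y. holder_path \<alpha> T Y \<longrightarrow> F t Y = F t (stopped Y (max (t - \<delta>) 0)))"

definition partition_of :: "real \<Rightarrow> real \<Rightarrow> real list \<Rightarrow> bool" where
  "partition_of a b p \<longleftrightarrow> p \<noteq> [] \<and> hd p = a \<and> last p = b \<and> sorted_wrt (<) p"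

definition mesh_less :: "real list \<Rightarrow> real \<Rightarrow> bool" where
  "mesh_less p \<eta> \<longleftrightarrow> (\<forall>i < length p - 1. p ! (i+1) - p ! i < \<eta>)"

definition riemann_sum ::
  "(real \<Rightarrow> ('v::real_normed_vector \<Rightarrow>\<^sub>L 'u::real_normed_vector)) \<Rightarrow> (real \<Rightarrow> 'v) \<Rightarrow> real list \<Rightarrow> 'u" where
  "riemann_sum W X p = (\<Sum>i < length p - 1. blinfun_apply (W (p ! i)) (X (p ! (i+1)) - X (p ! i)))"

definition has_young_integral ::
  "(real \<Rightarrow> ('v::real_normed_vector \<Rightarrow>\<^sub>L 'u::real_normed_vector)) \<Rightarrow> (real \<Rightarrow> 'v) \<Rightarrow> real \<Rightarrow> real \<Rightarrow> 'u \<Rightarrow> bool" where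
  "has_young_integral W X a b I \<longleftrightarrow>
     (\<forall>\<epsilon>>0. \<exists>\<eta>>0. \<forall>p. partition_of a b p \<and> mesh_less p \<eta> \<longrightarrow> norm (riemann_sum W X p - I) < \<epsilon>)"

end

theory Submission
  imports Defs
begin


definition nxt :: "real set \<Rightarrow> real \<Rightarrow> real" where
  "nxt Q x = Min {y\<in>Q. x < y}"

definition part :: "real \<Rightarrow> real \<Rightarrow> real set \<Rightarrow> bool" where
  "part a b Q \<longleftrightarrow> finite Q \<and> a \<in> Q \<and> b \<in> Q \<and> Q \<subseteq> {a..b}"

definition RS :: "(real \<Rightarrow> real \<Rightarrow> 'a::real_normed_vector) \<Rightarrow> real \<Rightarrow> real set \<Rightarrow> 'a" where
  "RS \<Xi> b Q = (\<Sum>x\<in>Q - {b}. \<Xi> x (nxt Q x))"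

lemma nxt_props:
  assumes "finite Q" "y \<in> Q" "x < y"
  shows "nxt Q x \<in> Q" "x < nxt Q x" "nxt Q x \<le> y"
proof -
  have f: "finite {y\<in>Q. x < y}" "{y\<in>Q. x < y} \<noteq> {}" using assms by auto
  have "nxt Q x \<in> {y\<in>Q. x < y}" unfolding nxt_def using Min_in[OF f] .
  thus "nxt Q x \<in> Q" "x < nxt Q x" by auto
  show "nxt Q x \<le> y" unfolding nxt_def using f assms by (intro Min_le) auto
qed

lemma nxt_eqI:
  assumes "finite Q" "z \<in> Q" "x < z" "\<And>w. w \<in> Q \<Longrightarrow> x < w \<Longrightarrow> z \<le> w"
  shows "nxt Q x = z"
  unfolding nxt_def using assms by (intro Min_eqI) auto

lemma part_finite: "part a b Q \<Longrightarrow> finite Q" by (simp add: part_def)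

lemma part_le: "part a b Q \<Longrightarrow> a \<le> b" by (auto simp: part_def)

lemma RS_single: "RS \<Xi> a {a} = 0" by (simp add: RS_def)

lemma part_single: "part a a Q \<Longrightarrow> Q = {a}" by (auto simp: part_def)

lemma RS_two:
  assumes "x < y" shows "RS \<Xi> y {x,y} = \<Xi> x y"
proof -
  have "nxt {x,y} x = y" using assms by (intro nxt_eqI) auto
  moreover have "{x,y} - {y} = {x}" using assms by auto
  ultimately show ?thesis by (simp add: RS_def)
qed

lemma RS_three:
  assumes "x < u" "u < y" shows "RS \<Xi> y {x,u,y} = \<Xi> x u + \<Xi> u y"
proof -
  have "nxt {x,u,y} x = u" using assms by (intro nxt_eqI) auto
  moreover have "nxt {x,u,y} u = y" using assms by (intro nxt_eqI) auto
  moreover have "{x,u,y} - {y} = {x,u}" using assms by auto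
  ultimately show ?thesis using assms by (simp add: RS_def)
qed

lemma nxt_in_part:
  assumes "part a b Q" "x \<in> Q - {b}"
  shows "nxt Q x \<in> Q" "x < nxt Q x" "nxt Q x \<le> b"
proof -
  have "x < b" using assms by (auto simp: part_def)
  then show "nxt Q x \<in> Q" "x < nxt Q x" "nxt Q x \<le> b"
    using nxt_props[of Q b x] assms by (auto simp: part_def)
qed

lemma RS_group:
  assumes P: "part a b P" and Q: "part a b Q" and PQ: "P \<subseteq> Q"
  shows "RS \<Xi> b Q = (\<Sum>x\<in>P-{b}. RS \<Xi> (nxt P x) (Q \<inter> {x..nxt P x}))"
proof -
  have fQ: "finite Q" and fP: "finite P" using P Q by (auto simp: part_def)
  define B where "B x = {y\<in>Q. x \<le> y \<and> y < nxt P x}" for x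
  have blk: "RS \<Xi> (nxt P x) (Q \<inter> {x..nxt P x}) = (\<Sum>y\<in>B x. \<Xi> y (nxt Q y))"
    if x: "x \<in> P - {b}" for x
  proof -
    have nx: "nxt P x \<in> P" "x < nxt P x" "nxt P x \<le> b" using nxt_in_part[OF P x] by auto
    have e1: "Q \<inter> {x..nxt P x} - {nxt P x} = B x" unfolding B_def by auto
    have e2: "nxt (Q \<inter> {x..nxt P x}) y = nxt Q y" if y: "y \<in> B x" for y
    proof -
      have yl: "y < nxt P x" "y \<in> Q" "x \<le> y" using y unfolding B_def by auto
      have "nxt P x \<in> Q" using nx PQ by auto
      note np = nxt_props[OF fQ this yl(1)]
      show ?thesis
        by (rule nxt_eqI) (use fQ np yl nxt_props(3)[OF fQ] in auto)
    qed
    show ?thesis unfolding RS_def e1 using e2 by (intro sum.cong) auto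
  qed
  have un: "Q - {b} = (\<Union>x\<in>P-{b}. B x)"
  proof
    show "(\<Union>x\<in>P-{b}. B x) \<subseteq> Q - {b}"
    proof
      fix y assume "y \<in> (\<Union>x\<in>P-{b}. B x)"
      then obtain x where x: "x \<in> P - {b}" "y \<in> B x" by auto
      then show "y \<in> Q - {b}" using nxt_in_part[OF P x(1)] unfolding B_def by auto
    qed
  next
    show "Q - {b} \<subseteq> (\<Union>x\<in>P-{b}. B x)"
    proof
      fix y assume y: "y \<in> Q - {b}"
      then have yb: "y < b" "a \<le> y" using Q by (auto simp: part_def)
      define S where "S = {z\<in>P. z \<le> y}"
      have fS: "finite S" "S \<noteq> {}" using fP P yb unfolding S_def part_def by auto
      define x where "x = Max S"
      have xS: "x \<in> S" unfolding x_def using Min_in fS by (simp add: Max_in)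
      have xP: "x \<in> P - {b}" using xS yb unfolding S_def by auto
      note nx = nxt_in_part[OF P xP]
      have "y < nxt P x"
      proof (rule ccontr)
        assume "\<not> y < nxt P x"
        then have "nxt P x \<in> S" using nx unfolding S_def by auto
        then have "nxt P x \<le> x" unfolding x_def using fS by auto
        then show False using nx by auto
      qed
      then have "y \<in> B x" using xS y unfolding B_def S_def by auto
      then show "y \<in> (\<Union>x\<in>P-{b}. B x)" using xP by auto
    qed
  qed
  have disj: "\<forall>x1\<in>P-{b}. \<forall>x2\<in>P-{b}. x1 \<noteq> x2 \<longrightarrow> B x1 \<inter> B x2 = {}"
  proof (intro ballI impI)
    fix x1 x2 assume x: "x1 \<in> P-{b}" "x2 \<in> P-{b}" "x1 \<noteq> x2"
    have *: "B u \<inter> B v = {}" if "u \<in> P-{b}" "v \<in> P-{b}" "u < v" for u v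
    proof -
      have "nxt P u \<le> v" using nxt_props(3)[OF fP _ \<open>u < v\<close>] that by auto
      then show ?thesis unfolding B_def by auto
    qed
    show "B x1 \<inter> B x2 = {}"
    proof (cases "x1 < x2")
      case True then show ?thesis using * x by auto
    next
      case False then have "x2 < x1" using x by auto
      then show ?thesis using *[of x2 x1] x by auto
    qed
  qed
  have "RS \<Xi> b Q = (\<Sum>y\<in>(\<Union>x\<in>P-{b}. B x). \<Xi> y (nxt Q y))" unfolding RS_def un ..
  also have "\<dots> = (\<Sum>x\<in>P-{b}. \<Sum>y\<in>B x. \<Xi> y (nxt Q y))"
    by (rule sum.UNION_disjoint) (use fP fQ disj in \<open>auto simp: B_def\<close>)
  also have "\<dots> = (\<Sum>x\<in>P-{b}. RS \<Xi> (nxt P x) (Q \<inter> {x..nxt P x}))"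
    using blk by (intro sum.cong) auto
  finally show ?thesis .
qed

lemma RS_group_diff:
  assumes P: "part a b P" and Q: "part a b Q" and PQ: "P \<subseteq> Q"
  shows "RS \<Xi> b Q - RS \<Xi> b P = (\<Sum>x\<in>P-{b}. RS \<Xi> (nxt P x) (Q \<inter> {x..nxt P x}) - \<Xi> x (nxt P x))"
  unfolding RS_group[OF assms, of \<Xi>] by (simp add: RS_def sum_subtractf)



lemma RS_remove:
  assumes Q: "part a b Q" and x: "x \<in> Q" "x < b" and ub: "nxt Q x < b"
  shows "RS \<Xi> b Q = RS \<Xi> b (Q - {nxt Q x})
           + (\<Xi> x (nxt Q x) + \<Xi> (nxt Q x) (nxt Q (nxt Q x)) - \<Xi> x (nxt Q (nxt Q x)))"
proof -
  have fQ: "finite Q" and bQ: "b \<in> Q" and aQ: "a \<in> Q" and Qab: "Q \<subseteq> {a..b}" using Q by (auto simp: part_def)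
  define u where "u = nxt Q x"
  define v where "v = nxt Q u"
  have u: "u \<in> Q" "x < u" "u \<le> b" using nxt_props[OF fQ bQ x(2)] unfolding u_def by auto
  have ub': "u < b" using ub unfolding u_def .
  have v: "v \<in> Q" "u < v" "v \<le> b" using nxt_props[OF fQ bQ ub'] unfolding v_def by auto
  have ax: "a \<le> x" using x Qab by auto
  define P where "P = Q - {u}"
  have P: "part a b P" using Q u ax ub' unfolding P_def part_def by auto
  have PQ: "P \<subseteq> Q" unfolding P_def by auto
  define f where "f z = RS \<Xi> (nxt P z) (Q \<inter> {z..nxt P z}) - \<Xi> z (nxt P z)" for z
  have xP: "x \<in> P - {b}" using x u unfolding P_def by auto
  have fz: "f z = 0" if z: "z \<in> P - {b}" "z \<noteq> x" for z
  proof -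
    have zQ: "z \<in> Q" "z < b" "z \<noteq> u" using z Qab unfolding P_def by auto
    define m where "m = nxt Q z"
    have m: "m \<in> Q" "z < m" "m \<le> b" using nxt_props[OF fQ bQ zQ(2)] unfolding m_def by auto
    have mle: "\<And>w. w \<in> Q \<Longrightarrow> z < w \<Longrightarrow> m \<le> w" unfolding m_def using nxt_props(3)[OF fQ] by auto
    have mu: "m \<noteq> u"
    proof (cases "z < x")
      case True then have "m \<le> x" using mle x by auto
      then show ?thesis using u by auto
    next
      case False then have "x < z" using z by auto
      then have "u \<le> z" unfolding u_def using nxt_props(3)[OF fQ zQ(1)] by auto
      then show ?thesis using m zQ by auto
    qed
    have nP: "nxt P z = m"
      by (rule nxt_eqI) (use P mu m mle in \<open>auto simp: P_def part_def\<close>)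
    have "Q \<inter> {z..m} = {z, m}" using mle m zQ by force
    then show ?thesis unfolding f_def nP using RS_two[OF m(2)] by simp
  qed
  have fx: "f x = \<Xi> x u + \<Xi> u v - \<Xi> x v"
  proof -
    have vle: "\<And>w. w \<in> Q \<Longrightarrow> u < w \<Longrightarrow> v \<le> w" unfolding v_def using nxt_props(3)[OF fQ] by auto
    have ule: "\<And>w. w \<in> Q \<Longrightarrow> x < w \<Longrightarrow> u \<le> w" unfolding u_def using nxt_props(3)[OF fQ] by auto
    have nP: "nxt P x = v"
    proof (rule nxt_eqI)
      show "finite P" using P by (simp add: part_def)
      show "v \<in> P" using v unfolding P_def by auto
      show "x < v" using u v by auto
      fix w assume "w \<in> P" "x < w"
      then show "v \<le> w" using ule vle unfolding P_def by force
    qed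
    have "Q \<inter> {x..v} = {x, u, v}"
    proof
      show "Q \<inter> {x..v} \<subseteq> {x, u, v}"
      proof
        fix w assume w: "w \<in> Q \<inter> {x..v}"
        show "w \<in> {x,u,v}"
        proof (cases "w = x")
          case False
          then have "u \<le> w" using ule w by auto
          show ?thesis
          proof (cases "w = u")
            case False then have "v \<le> w" using vle w \<open>u \<le> w\<close> by auto
            then show ?thesis using w by auto
          qed auto
        qed auto
      qed
      show "{x, u, v} \<subseteq> Q \<inter> {x..v}" using u v x by auto
    qed
    then show ?thesis unfolding f_def nP using RS_three[OF u(2) v(2)] by simp
  qed
  have "RS \<Xi> b Q - RS \<Xi> b P = (\<Sum>z\<in>P-{b}. f z)" unfolding f_def by (rule RS_group_diff[OF P Q PQ])
  also have "\<dots> = f x + (\<Sum>z\<in>P-{b}-{x}. f z)"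
    by (rule sum.remove) (use P xP in \<open>auto simp: part_def\<close>)
  also have "\<dots> = f x" using fz by simp
  finally show ?thesis unfolding fx P_def u_def v_def by (simp add: algebra_simps)
qed

lemma part_card2:
  assumes "part a b Q" "a < b"
  shows "card Q \<ge> 2"
proof -
  have "{a,b} \<subseteq> Q" "finite Q" using assms by (auto simp: part_def)
  then have "card {a,b} \<le> card Q" by (rule card_mono[rotated])
  then show ?thesis using assms by auto
qed

lemma part_interior:
  assumes "part a b Q" "a < b" "Q \<noteq> {a,b}"
  obtains w where "w \<in> Q" "a < w" "w < b"
proof -
  have "Q \<subseteq> {a..b}" "a \<in> Q" "b \<in> Q" using assms by (auto simp: part_def)
  then obtain w where "w \<in> Q" "w \<noteq> a" "w \<noteq> b" using assms(3) by blast
  then show ?thesis using that \<open>Q \<subseteq> {a..b}\<close> by force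
qed

lemma RS_additive:
  assumes "part a b Q" "a < b"
    and add: "\<And>x y z. a \<le> x \<Longrightarrow> x < y \<Longrightarrow> y < z \<Longrightarrow> z \<le> b \<Longrightarrow> \<Xi> x z = \<Xi> x y + \<Xi> y z"
  shows "RS \<Xi> b Q = \<Xi> a b"
  using assms(1)
proof (induct "card Q" arbitrary: Q rule: less_induct)
  case less
  note Q = less.prems
  have fQ: "finite Q" and bQ: "b \<in> Q" and aQ: "a \<in> Q" and Qab: "Q \<subseteq> {a..b}" using Q by (auto simp: part_def)
  show ?case
  proof (cases "Q = {a,b}")
    case True then show ?thesis using RS_two[OF assms(2)] by simp
  next
    case False
    then obtain w where w: "w \<in> Q" "a < w" "w < b" using part_interior[OF Q assms(2)] by blast
    define u where "u = nxt Q a"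
    have u: "u \<in> Q" "a < u" "u \<le> w" using nxt_props[OF fQ w(1,2)] unfolding u_def by auto
    have ub: "u < b" using u w by auto
    define v where "v = nxt Q u"
    have v: "v \<in> Q" "u < v" "v \<le> b" using nxt_props[OF fQ bQ ub] unfolding v_def by auto
    have P: "part a b (Q - {u})" using Q u ub unfolding part_def by auto
    have c: "card (Q - {u}) < card Q" using fQ u by (meson card_Diff1_less)
    have "RS \<Xi> b Q = RS \<Xi> b (Q - {u}) + (\<Xi> a u + \<Xi> u v - \<Xi> a v)"
      using RS_remove[OF Q aQ assms(2), of \<Xi>] ub unfolding u_def v_def by simp
    also have "\<Xi> a v = \<Xi> a u + \<Xi> u v" using add[of a u v] u v by auto
    finally show ?thesis using less.hyps[OF c P] by simp
  qed
qed

lemma telescope: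
  assumes "part a b Q" "a < b"
  shows "(\<Sum>x\<in>Q-{b}. nxt Q x - x) = b - a"
  using RS_additive[OF assms, of "\<lambda>x y. y - x"] unfolding RS_def by simp

lemma nxt_inj:
  assumes "part a b Q"
  shows "inj_on (nxt Q) (Q - {b})"
proof -
  have *: "nxt Q x < nxt Q y" if "x \<in> Q - {b}" "y \<in> Q - {b}" "x < y" for x y
    using nxt_props(3)[of Q y x] nxt_in_part[OF assms that(2)] that assms by (auto simp: part_def)
  show ?thesis
  proof (rule inj_onI)
    fix x y assume xy: "x \<in> Q - {b}" "y \<in> Q - {b}" "nxt Q x = nxt Q y"
    show "x = y"
    proof (rule ccontr)
      assume "x \<noteq> y"
      then consider "x < y" | "y < x" by linarith
      then show False using * xy by (cases) force+
    qed
  qed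
qed



lemma sewing:
  fixes \<Xi> :: "real \<Rightarrow> real \<Rightarrow> 'a::real_normed_vector"
  assumes Q: "part s t Q" and st: "s < t" and K: "K \<ge> 0" and th: "\<theta> \<ge> 0"
    and hyp: "\<And>x y z. s \<le> x \<Longrightarrow> x \<le> y \<Longrightarrow> y \<le> z \<Longrightarrow> z \<le> t \<Longrightarrow>
                norm (\<Xi> x z - \<Xi> x y - \<Xi> y z) \<le> K * (z - x) powr \<theta>"
  shows "norm (RS \<Xi> t Q - \<Xi> s t) \<le> K * (t - s) powr \<theta> * (\<Sum>j\<in>{1..<card Q - 1}. (2 / real j) powr \<theta>)"
  using Q
proof (induct "card Q" arbitrary: Q rule: less_induct)
  case less
  note Q = less.prems
  have fQ: "finite Q" and tQ: "t \<in> Q" and sQ: "s \<in> Q" and Qst: "Q \<subseteq> {s..t}" using Q by (auto simp: part_def)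
  have sumnn: "0 \<le> (\<Sum>j\<in>{1..<n}. (2 / real j) powr \<theta>)" for n by (intro sum_nonneg) auto
  show ?case
  proof (cases "Q = {s,t}")
    case True then show ?thesis using RS_two[OF st, of \<Xi>] sumnn K by simp
  next
    case False
    define k where "k = card Q"
    have k3: "k \<ge> 3"
    proof -
      obtain w where "w \<in> Q" "s < w" "w < t" using part_interior[OF Q st False] by blast
      then have "{s,w,t} \<subseteq> Q" using sQ tQ by auto
      then have "card {s,w,t} \<le> card Q" using fQ by (intro card_mono) auto
      then show ?thesis using \<open>s < w\<close> \<open>w < t\<close> unfolding k_def by auto
    qed
    let ?n = "nxt Q"
    define D where "D = {x\<in>Q-{t}. ?n x < t}"
    define E where "E = {x\<in>Q-{t}. ?n x = t}"
    have inj: "inj_on ?n (Q - {t})" by (rule nxt_inj[OF Q])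
    have nle: "?n x \<le> t" "x < ?n x" "?n x \<in> Q" if "x \<in> Q - {t}" for x using nxt_in_part[OF Q that] by auto
    have QDE: "Q - {t} = D \<union> E" "D \<inter> E = {}" unfolding D_def E_def using nle by force+
    have fD: "finite D" "finite E" using fQ unfolding D_def E_def by auto
    have cE: "card E \<le> 1"
    proof -
      have "inj_on ?n E" using inj unfolding E_def by (rule inj_on_subset) auto
      then have "card E = card (?n ` E)" by (simp add: card_image)
      also have "?n ` E \<subseteq> {t}" unfolding E_def by auto
      then have "card (?n ` E) \<le> card {t}" by (intro card_mono) auto
      finally show ?thesis by simp
    qed
    have cQt: "card (Q - {t}) = k - 1" using fQ tQ unfolding k_def by simp
    have "card (Q - {t}) = card D + card E" using QDE fD by (simp add: card_Un_disjoint)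
    then have cD: "card D \<ge> k - 2" using cE cQt by linarith
    then have Dne: "D \<noteq> {}" using k3 fD by auto
    define gap where "gap x = ?n (?n x) - x" for x
    have tel: "(\<Sum>x\<in>Q-{t}. ?n x - x) = t - s" by (rule telescope[OF Q st])
    have s1: "(\<Sum>x\<in>D. ?n x - x) \<le> t - s"
      unfolding tel[symmetric] by (rule sum_mono2) (use fQ fD QDE nle in \<open>auto simp: less_imp_le\<close>)
    have nD: "?n ` D \<subseteq> Q - {t}" unfolding D_def using nle by auto
    have injD: "inj_on ?n D" using inj_on_subset[OF inj] QDE by auto
    have "(\<Sum>x\<in>D. ?n (?n x) - ?n x) = (\<Sum>y\<in>?n ` D. ?n y - y)"
      by (simp add: sum.reindex[OF injD])
    also have "\<dots> \<le> t - s"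
      unfolding tel[symmetric] by (rule sum_mono2) (use fQ fD nD nle in \<open>auto simp: less_imp_le\<close>)
    finally have s2: "(\<Sum>x\<in>D. ?n (?n x) - ?n x) \<le> t - s" .
    have sg: "(\<Sum>x\<in>D. gap x) \<le> 2 * (t - s)"
    proof -
      have "(\<Sum>x\<in>D. gap x) = (\<Sum>x\<in>D. ?n x - x) + (\<Sum>x\<in>D. ?n (?n x) - ?n x)"
        unfolding gap_def by (simp add: sum.distrib[symmetric])
      then show ?thesis using s1 s2 by simp
    qed
    define x where "x = arg_min_on gap D"
    have xD: "x \<in> D" and xmin: "\<And>y. y \<in> D \<Longrightarrow> gap x \<le> gap y"
      using arg_min_if_finite[OF fD(1) Dne, of gap] unfolding x_def by (auto simp: not_less)
    have "real (card D) * gap x \<le> (\<Sum>y\<in>D. gap y)" by (rule sum_bounded_below) (use xmin in auto)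
    then have cg: "real (card D) * gap x \<le> 2 * (t - s)" using sg by simp
    have kD: "real (k - 2) \<le> real (card D)" using cD by simp
    have k2pos: "real (k - 2) > 0" using k3 by simp
    have gnn: "gap x \<ge> 0"
    proof -
      have "x \<in> Q - {t}" "?n x < t" using xD unfolding D_def by auto
      then have "x < ?n x" "?n x \<in> Q - {t}" using nle by auto
      then have "?n x < ?n (?n x)" using nle by blast
      then show ?thesis using \<open>x < ?n x\<close> unfolding gap_def by simp
    qed
    have gb: "gap x \<le> (t - s) * (2 / real (k - 2))"
    proof -
      have "real (k - 2) * gap x \<le> real (card D) * gap x" using kD gnn by (rule mult_right_mono)
      then have "real (k - 2) * gap x \<le> 2 * (t - s)" using cg by simp
      then show ?thesis using k2pos by (simp add: field_simps)
    qed
    define u where "u = ?n x"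
    define v where "v = ?n u"
    have xQ: "x \<in> Q" "x < t" and ut: "u < t" using xD Qst unfolding D_def u_def by force+
    have u: "u \<in> Q" "x < u" using nle xD unfolding D_def u_def by auto
    have v: "v \<in> Q" "u < v" "v \<le> t" using nle[of u] u ut unfolding v_def by auto
    have rem: "RS \<Xi> t Q = RS \<Xi> t (Q - {u}) + (\<Xi> x u + \<Xi> u v - \<Xi> x v)"
      using RS_remove[OF Q xQ] ut unfolding u_def v_def by simp
    have P: "part s t (Q - {u})" using Q u xQ ut Qst unfolding part_def by force
    have cP: "card (Q - {u}) = k - 1" using fQ u unfolding k_def by simp
    have c: "card (Q - {u}) < card Q" using cP k3 unfolding k_def by simp
    have IH: "norm (RS \<Xi> t (Q - {u}) - \<Xi> s t) \<le> K * (t - s) powr \<theta> * (\<Sum>j\<in>{1..<k - 2}. (2 / real j) powr \<theta>)"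
      using less.hyps[OF c P] unfolding cP by (simp add: numeral_2_eq_2)
    have xs: "s \<le> x" using xQ Qst by auto
    have "norm (\<Xi> x u + \<Xi> u v - \<Xi> x v) = norm (\<Xi> x v - \<Xi> x u - \<Xi> u v)"
      by (metis (no_types, lifting) add_diff_cancel_left' diff_diff_eq2 minus_diff_eq norm_minus_commute)
    also have "\<dots> \<le> K * (v - x) powr \<theta>" using hyp[of x u v] xs u v by auto
    also have "\<dots> \<le> K * ((t - s) * (2 / real (k - 2))) powr \<theta>"
      using gb gnn th K unfolding gap_def u_def[symmetric] v_def[symmetric]
      by (intro mult_left_mono powr_mono2) auto
    also have "\<dots> = K * (t - s) powr \<theta> * (2 / real (k - 2)) powr \<theta>"
      using st k2pos by (subst powr_mult) auto
    finally have dl: "norm (\<Xi> x u + \<Xi> u v - \<Xi> x v) \<le> K * (t - s) powr \<theta> * (2 / real (k - 2)) powr \<theta>" .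
    have ssum: "(\<Sum>j\<in>{1..<k - 1}. (2 / real j) powr \<theta>) = (\<Sum>j\<in>{1..<k - 2}. (2 / real j) powr \<theta>) + (2 / real (k - 2)) powr \<theta>"
    proof -
      have "k - 1 = Suc (k - 2)" using k3 by simp
      then show ?thesis using k3 by (simp add: sum.atLeastLessThan_Suc)
    qed
    have "norm (RS \<Xi> t Q - \<Xi> s t) \<le> norm (RS \<Xi> t (Q - {u}) - \<Xi> s t) + norm (\<Xi> x u + \<Xi> u v - \<Xi> x v)"
      unfolding rem by (rule order_trans[OF _ norm_triangle_ineq]) (simp add: algebra_simps)
    also have "\<dots> \<le> K * (t - s) powr \<theta> * (\<Sum>j\<in>{1..<k - 1}. (2 / real j) powr \<theta>)"
      using IH dl unfolding ssum by (simp add: algebra_simps)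
    finally show ?thesis unfolding k_def .
  qed
qed



definition Cth :: "real \<Rightarrow> real" where
  "Cth \<theta> = 2 powr \<theta> * suminf (\<lambda>n. real n powr (-\<theta>))"

lemma Cth_bound:
  assumes "\<theta> > 1"
  shows "(\<Sum>j\<in>{1..<m}. (2 / real j) powr \<theta>) \<le> Cth \<theta>" "0 \<le> Cth \<theta>"
proof -
  have sm: "summable (\<lambda>n. real n powr (-\<theta>))" using summable_real_powr_iff[of "-\<theta>"] assms by simp
  have "(\<Sum>j\<in>{1..<m}. (2 / real j) powr \<theta>) = (\<Sum>j\<in>{1..<m}. 2 powr \<theta> * real j powr (-\<theta>))"
    by (intro sum.cong refl) (auto simp: powr_divide powr_minus_divide)
  also have "\<dots> = 2 powr \<theta> * (\<Sum>j\<in>{1..<m}. real j powr (-\<theta>))" by (simp add: sum_distrib_left)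
  also have "\<dots> \<le> 2 powr \<theta> * suminf (\<lambda>n. real n powr (-\<theta>))"
    by (intro mult_left_mono sum_le_suminf sm) auto
  finally show "(\<Sum>j\<in>{1..<m}. (2 / real j) powr \<theta>) \<le> Cth \<theta>" unfolding Cth_def .
  show "0 \<le> Cth \<theta>" unfolding Cth_def by (intro mult_nonneg_nonneg suminf_nonneg sm) auto
qed

definition Xi :: "(real \<Rightarrow> ('v::real_normed_vector \<Rightarrow>\<^sub>L 'u::real_normed_vector)) \<Rightarrow> (real \<Rightarrow> 'v) \<Rightarrow> real \<Rightarrow> real \<Rightarrow> 'u" where
  "Xi W X s t = blinfun_apply (W s) (X t - X s)"

definition hold :: "real \<Rightarrow> real \<Rightarrow> real \<Rightarrow> real \<Rightarrow> (real \<Rightarrow> 'a::real_normed_vector) \<Rightarrow> bool" where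
  "hold K e a b f \<longleftrightarrow> K \<ge> 0 \<and> (\<forall>s\<in>{a..b}. \<forall>t\<in>{a..b}. norm (f t - f s) \<le> K * \<bar>t - s\<bar> powr e)"

lemma hold_sub: "hold K e a b f \<Longrightarrow> a \<le> c \<Longrightarrow> d \<le> b \<Longrightarrow> hold K e c d f"
  unfolding hold_def by auto

lemma Xi_delta:
  assumes W: "hold Kw \<gamma> a b W" and X: "hold Kx \<alpha> a b X" and pos: "\<alpha> > 0" "\<gamma> > 0"
    and xyz: "a \<le> x" "x \<le> y" "y \<le> z" "z \<le> b"
  shows "norm (Xi W X x z - Xi W X x y - Xi W X y z) \<le> Kw * Kx * (z - x) powr (\<alpha> + \<gamma>)"
proof -
  have Kn: "Kw \<ge> 0" "Kx \<ge> 0" using W X by (auto simp: hold_def)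
  have "Xi W X x z - Xi W X x y - Xi W X y z = blinfun_apply (W x - W y) (X z - X y)"
    unfolding Xi_def by (simp add: blinfun.diff_left blinfun.diff_right algebra_simps)
  then have "norm (Xi W X x z - Xi W X x y - Xi W X y z) \<le> norm (W x - W y) * norm (X z - X y)"
    using norm_blinfun by metis
  also have "\<dots> \<le> (Kw * (z - x) powr \<gamma>) * (Kx * (z - x) powr \<alpha>)"
  proof (intro mult_mono)
    have xy: "x \<in> {a..b}" "y \<in> {a..b}" using xyz by auto
    have "norm (W y - W x) \<le> Kw * \<bar>y - x\<bar> powr \<gamma>" using W xy unfolding hold_def by blast
    then have "norm (W x - W y) \<le> Kw * \<bar>x - y\<bar> powr \<gamma>" by (simp add: norm_minus_commute abs_minus_commute)
    also have "\<dots> \<le> Kw * (z - x) powr \<gamma>" using xyz pos Kn by (intro mult_left_mono powr_mono2) auto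
    finally show "norm (W x - W y) \<le> Kw * (z - x) powr \<gamma>" .
    have yz: "z \<in> {a..b}" "y \<in> {a..b}" using xyz by auto
    have "norm (X z - X y) \<le> Kx * \<bar>z - y\<bar> powr \<alpha>" using X yz unfolding hold_def by blast
    also have "\<dots> \<le> Kx * (z - x) powr \<alpha>" using xyz pos Kn by (intro mult_left_mono powr_mono2) auto
    finally show "norm (X z - X y) \<le> Kx * (z - x) powr \<alpha>" .
  qed (use Kn in auto)
  also have "\<dots> = Kw * Kx * (z - x) powr (\<alpha> + \<gamma>)" by (simp add: powr_add)
  finally show ?thesis .
qed

lemma Xi_sewing:
  assumes W: "hold Kw \<gamma> a b W" and X: "hold Kx \<alpha> a b X" and pos: "\<alpha> > 0" "\<gamma> > 0" "\<alpha> + \<gamma> > 1"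
    and Q: "part a b Q"
  shows "norm (RS (Xi W X) b Q - Xi W X a b) \<le> Cth (\<alpha>+\<gamma>) * Kw * Kx * (b - a) powr (\<alpha> + \<gamma>)"
proof (cases "a < b")
  case True
  have Kn: "Kw \<ge> 0" "Kx \<ge> 0" using W X by (auto simp: hold_def)
  have "norm (RS (Xi W X) b Q - Xi W X a b) \<le> Kw * Kx * (b - a) powr (\<alpha>+\<gamma>) * (\<Sum>j\<in>{1..<card Q - 1}. (2 / real j) powr (\<alpha>+\<gamma>))"
    by (rule sewing[OF Q True]) (use Kn pos Xi_delta[OF W X pos(1,2)] in auto)
  also have "\<dots> \<le> Kw * Kx * (b - a) powr (\<alpha>+\<gamma>) * Cth (\<alpha>+\<gamma>)"
    using Cth_bound[OF pos(3)] Kn by (intro mult_left_mono) auto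
  finally show ?thesis by (simp add: algebra_simps)
next
  case False
  then have "a = b" using part_le[OF Q] by auto
  then show ?thesis using part_single[of a Q] Q by (simp add: RS_def Xi_def)
qed



definition meshs :: "real set \<Rightarrow> real \<Rightarrow> real \<Rightarrow> bool" where
  "meshs Q b \<eta> \<longleftrightarrow> (\<forall>x\<in>Q-{b}. nxt Q x - x < \<eta>)"

definition ysi :: "(real \<Rightarrow> real \<Rightarrow> 'a::real_normed_vector) \<Rightarrow> real \<Rightarrow> real \<Rightarrow> 'a \<Rightarrow> bool" where
  "ysi \<Xi> a b I \<longleftrightarrow> (\<forall>\<epsilon>>0. \<exists>\<eta>>0. \<forall>Q. part a b Q \<and> meshs Q b \<eta> \<longrightarrow> norm (RS \<Xi> b Q - I) < \<epsilon>)"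

lemma list_to_set:
  assumes p: "partition_of a b p"
  shows "part a b (set p)" "riemann_sum W X p = RS (Xi W X) b (set p)"
    "mesh_less p \<eta> \<Longrightarrow> meshs (set p) b \<eta>"
proof -
  define n where "n = length p - 1"
  have pne: "p \<noteq> []" and hd: "hd p = a" and lst: "last p = b" and sw: "sorted_wrt (<) p"
    using p by (auto simp: partition_of_def)
  have len: "length p = Suc n" using pne unfolding n_def by (cases p) auto
  have p0: "p ! 0 = a" using hd pne by (simp add: hd_conv_nth)
  have pn: "p ! n = b" using lst pne unfolding n_def by (simp add: last_conv_nth)
  have mono: "\<And>i j. i < j \<Longrightarrow> j \<le> n \<Longrightarrow> p ! i < p ! j"
    using sorted_wrt_nth_less[OF sw] len by auto
  have mono': "\<And>i j. i \<le> j \<Longrightarrow> j \<le> n \<Longrightarrow> p ! i \<le> p ! j"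
    using mono by (metis order_le_less)
  have sp: "set p = (\<lambda>i. p ! i) ` {..n}" using len by (auto simp: set_conv_nth less_Suc_eq_le)
  show P: "part a b (set p)"
    unfolding part_def using mono'[of 0] mono'[of _ n] p0 pn sp len by (auto simp: image_iff)
  have nx: "nxt (set p) (p ! i) = p ! Suc i" if "i < n" for i
  proof (rule nxt_eqI)
    show "p ! Suc i \<in> set p" using that len by auto
    show "p ! i < p ! Suc i" using mono that by auto
    fix w assume "w \<in> set p" "p ! i < w"
    then obtain j where j: "j \<le> n" "w = p ! j" using sp by auto
    have "i < j"
    proof (rule ccontr)
      assume "\<not> i < j"
      then have "p ! j \<le> p ! i" using mono'[of j i] that by auto
      then show False using j \<open>p ! i < w\<close> by auto
    qed
    then show "p ! Suc i \<le> w" using j mono' by auto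
  qed simp
  have sb: "set p - {b} = (\<lambda>i. p ! i) ` {..<n}"
  proof -
    have "p ! i \<noteq> b" if "i < n" for i using mono[of i n] that pn by auto
    then show ?thesis unfolding sp using pn
      by (auto simp: image_iff) (metis le_neq_implies_less lessThan_iff)
  qed
  have inj: "inj_on (\<lambda>i. p ! i) {..<n}"
  proof (rule inj_onI)
    fix i j assume ij: "i \<in> {..<n}" "j \<in> {..<n}" "p ! i = p ! j"
    show "i = j"
    proof (rule ccontr)
      assume "i \<noteq> j"
      then consider "i < j" | "j < i" by linarith
      then show False using mono[of i j] mono[of j i] ij by cases auto
    qed
  qed
  have "RS (Xi W X) b (set p) = (\<Sum>i<n. Xi W X (p ! i) (nxt (set p) (p ! i)))"
    unfolding RS_def sb by (simp add: sum.reindex[OF inj])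
  also have "\<dots> = riemann_sum W X p"
    unfolding riemann_sum_def n_def[symmetric] Xi_def using nx by (intro sum.cong) auto
  finally show "riemann_sum W X p = RS (Xi W X) b (set p)" ..
  assume "mesh_less p \<eta>"
  then have "p ! Suc i - p ! i < \<eta>" if "i < n" for i using that unfolding mesh_less_def n_def by auto
  then show "meshs (set p) b \<eta>" unfolding meshs_def sb using nx by auto
qed

lemma uniform_list:
  assumes "a < b" "\<eta> > 0"
  shows "\<exists>p. partition_of a b p \<and> mesh_less p \<eta>"
proof -
  obtain N :: nat where N: "(b - a) / \<eta> < real N" using reals_Archimedean2 by blast
  have "(b - a) / \<eta> > 0" using assms by simp
  then have Npos: "real N > 0" using N by linarith
  define f where "f i = a + (b - a) * real i / real N" for i :: nat
  define p where "p = map f [0..<Suc N]"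
  have fm: "f i < f j" if "i < j" for i j
    unfolding f_def using assms Npos that by (simp add: divide_strict_right_mono mult_strict_left_mono)
  have "partition_of a b p"
    unfolding partition_of_def p_def
  proof (intro conjI)
    show "map f [0..<Suc N] \<noteq> []" by simp
    show "hd (map f [0..<Suc N]) = a" by (simp add: f_def upt_conv_Cons del: upt_Suc)
    show "last (map f [0..<Suc N]) = b" using Npos by (simp add: f_def)
    show "sorted_wrt (<) (map f [0..<Suc N])" unfolding sorted_wrt_map
      by (rule sorted_wrt_mono_rel[OF _ sorted_wrt_upt]) (use fm in auto)
  qed
  moreover have "mesh_less p \<eta>"
    unfolding mesh_less_def p_def
  proof (intro allI impI)
    fix i assume i: "i < length (map f [0..<Suc N]) - 1"
    have "f (i+1) - f i = (b - a) / real N" unfolding f_def using Npos by (simp add: field_simps)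
    also have "\<dots> < \<eta>" using N Npos assms by (simp add: field_simps)
    finally show "map f [0..<Suc N] ! (i + 1) - map f [0..<Suc N] ! i < \<eta>"
      using i by (simp del: upt_Suc add: nth_map_upt)
  qed
  ultimately show ?thesis by blast
qed

lemma part_mesh_exists:
  assumes "a \<le> b" "\<eta> > 0"
  shows "\<exists>Q. part a b Q \<and> meshs Q b \<eta>"
proof (cases "a = b")
  case True then show ?thesis by (intro exI[of _ "{a}"]) (auto simp: part_def meshs_def)
next
  case False
  then have "a < b" using assms by simp
  then obtain p where p: "partition_of a b p" "mesh_less p \<eta>" using uniform_list assms(2) by blast
  have "part a b (set p)" "meshs (set p) b \<eta>" using list_to_set(1)[OF p(1)] list_to_set(3)[OF p(1) p(2)] by auto
  then show ?thesis by blast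
qed

lemma ysi_unique:
  assumes "a \<le> b" "ysi \<Xi> a b I" "ysi \<Xi> a b J"
  shows "I = J"
proof (rule ccontr)
  assume ne: "I \<noteq> J"
  define e where "e = norm (I - J) / 2"
  have e: "e > 0" using ne unfolding e_def by simp
  obtain \<eta>1 where h1: "\<eta>1 > 0" "\<forall>Q. part a b Q \<and> meshs Q b \<eta>1 \<longrightarrow> norm (RS \<Xi> b Q - I) < e"
    using assms(2) e unfolding ysi_def by blast
  obtain \<eta>2 where h2: "\<eta>2 > 0" "\<forall>Q. part a b Q \<and> meshs Q b \<eta>2 \<longrightarrow> norm (RS \<Xi> b Q - J) < e"
    using assms(3) e unfolding ysi_def by blast
  obtain Q where Q: "part a b Q" "meshs Q b (min \<eta>1 \<eta>2)" using part_mesh_exists[OF assms(1), of "min \<eta>1 \<eta>2"] h1 h2 by auto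
  have "meshs Q b \<eta>1" "meshs Q b \<eta>2" using Q unfolding meshs_def by auto
  then have "norm (RS \<Xi> b Q - I) < e" "norm (RS \<Xi> b Q - J) < e" using h1 h2 Q by auto
  then have "norm (I - J) < 2 * e" using norm_triangle_lt[of "I - RS \<Xi> b Q" "RS \<Xi> b Q - J"]
    by (simp add: norm_minus_commute)
  then show False unfolding e_def by simp
qed

lemma ysi_to_young:
  assumes "ysi (Xi W X) a b I"
  shows "has_young_integral W X a b I"
  unfolding has_young_integral_def
proof (intro allI impI)
  fix e :: real assume "e > 0"
  then obtain \<eta> where "\<eta> > 0" "\<forall>Q. part a b Q \<and> meshs Q b \<eta> \<longrightarrow> norm (RS (Xi W X) b Q - I) < e"
    using assms unfolding ysi_def by blast
  then show "\<exists>\<eta>>0. \<forall>p. partition_of a b p \<and> mesh_less p \<eta> \<longrightarrow> norm (riemann_sum W X p - I) < e"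
  proof (intro exI conjI allI impI)
    fix p assume p: "partition_of a b p \<and> mesh_less p \<eta>"
    then have "part a b (set p)" "meshs (set p) b \<eta>" "riemann_sum W X p = RS (Xi W X) b (set p)"
      using list_to_set[of a b p] by auto
    then show "norm (riemann_sum W X p - I) < e" using \<open>\<forall>Q. _\<close> by auto
  qed (use \<open>\<eta> > 0\<close> in auto)
qed

lemma young_ysi_eq:
  assumes "a \<le> b" "has_young_integral W X a b I" "ysi (Xi W X) a b J"
  shows "I = J"
proof (rule ccontr)
  assume ne: "I \<noteq> J"
  define e where "e = norm (I - J) / 2"
  have e: "e > 0" using ne unfolding e_def by simp
  obtain \<eta>1 where h1: "\<eta>1 > 0" "\<forall>p. partition_of a b p \<and> mesh_less p \<eta>1 \<longrightarrow> norm (riemann_sum W X p - I) < e"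
    using assms(2) e unfolding has_young_integral_def by blast
  obtain \<eta>2 where h2: "\<eta>2 > 0" "\<forall>Q. part a b Q \<and> meshs Q b \<eta>2 \<longrightarrow> norm (RS (Xi W X) b Q - J) < e"
    using assms(3) e unfolding ysi_def by blast
  obtain p where p: "partition_of a b p" "mesh_less p (min \<eta>1 \<eta>2)"
  proof (cases "a = b")
    case True
    have "partition_of a b [a]" "mesh_less [a] (min \<eta>1 \<eta>2)" using True by (auto simp: partition_of_def mesh_less_def)
    then show ?thesis using that by blast
  next
    case False
    then have "a < b" "min \<eta>1 \<eta>2 > 0" using assms(1) h1 h2 by auto
    then obtain p where "partition_of a b p" "mesh_less p (min \<eta>1 \<eta>2)" using uniform_list by blast
    then show ?thesis using that by blast
  qed
  have m: "mesh_less p \<eta>1" "mesh_less p \<eta>2" using p unfolding mesh_less_def by auto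
  have "norm (riemann_sum W X p - I) < e" using h1 p m by auto
  moreover have "norm (riemann_sum W X p - J) < e"
    using h2 list_to_set(1)[OF p(1)] list_to_set(2)[OF p(1), of W X] list_to_set(3)[OF p(1) m(2)] by auto
  ultimately have "norm (I - J) < 2 * e" using norm_triangle_lt[of "I - riemann_sum W X p" "riemann_sum W X p - J"]
    by (simp add: norm_minus_commute)
  then show False unfolding e_def by simp
qed



lemma refine_bound:
  assumes W: "hold Kw \<gamma> a b W" and X: "hold Kx \<alpha> a b X" and pos: "\<alpha> > 0" "\<gamma> > 0" "\<alpha> + \<gamma> > 1"
    and P: "part a b P" and R: "part a b R" and PR: "P \<subseteq> R" and m: "meshs P b \<eta>" and ab: "a < b"
  shows "norm (RS (Xi W X) b R - RS (Xi W X) b P) \<le> Cth (\<alpha>+\<gamma>) * Kw * Kx * \<eta> powr (\<alpha>+\<gamma>-1) * (b - a)"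
proof -
  let ?\<theta> = "\<alpha>+\<gamma>"
  define B where "B = Cth (\<alpha>+\<gamma>) * Kw * Kx"
  have Bn: "B \<ge> 0" using Cth_bound(2)[OF pos(3)] W X unfolding B_def hold_def by auto
  have fP: "finite P" using P by (simp add: part_def)
  have trm: "norm (RS (Xi W X) (nxt P x) (R \<inter> {x..nxt P x}) - Xi W X x (nxt P x)) \<le> B * \<eta> powr (?\<theta> - 1) * (nxt P x - x)"
    if x: "x \<in> P - {b}" for x
  proof -
    note nx = nxt_in_part[OF P x]
    have xa: "a \<le> x" using x P by (auto simp: part_def)
    have pR: "part x (nxt P x) (R \<inter> {x..nxt P x})" using R PR x nx unfolding part_def by auto
    have "norm (RS (Xi W X) (nxt P x) (R \<inter> {x..nxt P x}) - Xi W X x (nxt P x)) \<le> B * (nxt P x - x) powr ?\<theta>"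
    proof -
      have Wx: "hold Kw \<gamma> x (nxt P x) W" using hold_sub[OF W xa] nx by auto
      have Xx: "hold Kx \<alpha> x (nxt P x) X" using hold_sub[OF X xa] nx by auto
      show ?thesis unfolding B_def by (rule Xi_sewing[OF Wx Xx pos pR])
    qed
    also have "(nxt P x - x) powr ?\<theta> = (nxt P x - x) powr (?\<theta> - 1) * (nxt P x - x)"
      using nx by (simp add: powr_diff)
    also have "\<dots> \<le> \<eta> powr (?\<theta> - 1) * (nxt P x - x)"
    proof -
      have "nxt P x - x < \<eta>" using m x unfolding meshs_def by blast
      then show ?thesis using nx pos by (intro mult_right_mono powr_mono2) auto
    qed
    finally show ?thesis using Bn by (simp add: mult.assoc mult_left_mono)
  qed
  have "norm (RS (Xi W X) b R - RS (Xi W X) b P)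
      = norm (\<Sum>x\<in>P-{b}. RS (Xi W X) (nxt P x) (R \<inter> {x..nxt P x}) - Xi W X x (nxt P x))"
    by (simp add: RS_group_diff[OF P R PR])
  also have "\<dots> \<le> (\<Sum>x\<in>P-{b}. norm (RS (Xi W X) (nxt P x) (R \<inter> {x..nxt P x}) - Xi W X x (nxt P x)))"
    by (rule norm_sum)
  also have "\<dots> \<le> (\<Sum>x\<in>P-{b}. B * \<eta> powr (?\<theta> - 1) * (nxt P x - x))"
    by (rule sum_mono) (rule trm)
  also have "\<dots> = B * \<eta> powr (?\<theta> - 1) * (b - a)"
    using telescope[OF P ab] by (simp only: sum_distrib_left[symmetric])
  finally show ?thesis unfolding B_def .
qed

lemma cauchy_bound:
  assumes W: "hold Kw \<gamma> a b W" and X: "hold Kx \<alpha> a b X" and pos: "\<alpha> > 0" "\<gamma> > 0" "\<alpha> + \<gamma> > 1"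
    and P: "part a b P" and Q: "part a b Q" and mP: "meshs P b \<eta>" and mQ: "meshs Q b \<eta>" and ab: "a < b"
  shows "norm (RS (Xi W X) b P - RS (Xi W X) b Q) \<le> 2 * (Cth (\<alpha>+\<gamma>) * Kw * Kx * \<eta> powr (\<alpha>+\<gamma>-1) * (b - a))"
proof -
  have R: "part a b (P \<union> Q)" using P Q by (auto simp: part_def)
  have 1: "norm (RS (Xi W X) b (P \<union> Q) - RS (Xi W X) b P) \<le> Cth (\<alpha>+\<gamma>) * Kw * Kx * \<eta> powr (\<alpha>+\<gamma>-1) * (b - a)"
    by (rule refine_bound[OF W X pos P R _ mP ab]) auto
  have 2: "norm (RS (Xi W X) b (P \<union> Q) - RS (Xi W X) b Q) \<le> Cth (\<alpha>+\<gamma>) * Kw * Kx * \<eta> powr (\<alpha>+\<gamma>-1) * (b - a)"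
    by (rule refine_bound[OF W X pos Q R _ mQ ab]) auto
  have "norm (RS (Xi W X) b P - RS (Xi W X) b Q) \<le> norm (RS (Xi W X) b (P \<union> Q) - RS (Xi W X) b P) + norm (RS (Xi W X) b (P \<union> Q) - RS (Xi W X) b Q)"
    by (rule order_trans[OF _ norm_triangle_ineq4]) (simp add: norm_minus_commute)
  then show ?thesis using 1 2 by simp
qed

lemma eta_choice:
  fixes e C \<theta> :: real
  assumes "e > 0" "C \<ge> 0" "\<theta> > 1"
  shows "\<exists>\<eta>>0. C * \<eta> powr (\<theta> - 1) < e"
proof -
  define \<eta> where "\<eta> = (e / (C + 1)) powr (1 / (\<theta> - 1))"
  have "\<eta> > 0" unfolding \<eta>_def using assms by simp
  moreover have "\<eta> powr (\<theta> - 1) = e / (C + 1)"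
    unfolding \<eta>_def using assms by (simp add: powr_powr)
  moreover have "C * (e / (C + 1)) < e" using assms by (simp add: field_simps)
  ultimately show ?thesis by auto
qed

lemma ysi_exists:
  fixes W :: "real \<Rightarrow> ('v::real_normed_vector \<Rightarrow>\<^sub>L 'u::banach)"
  assumes W: "hold Kw \<gamma> a b W" and X: "hold Kx \<alpha> a b X" and pos: "\<alpha> > 0" "\<gamma> > 0" "\<alpha> + \<gamma> > 1"
    and ab: "a \<le> b"
  shows "\<exists>I. ysi (Xi W X) a b I"
proof (cases "a = b")
  case True
  have "ysi (Xi W X) a b 0" unfolding ysi_def
    using True part_single[of a] by (auto simp: RS_def)
  then show ?thesis by blast
next
  case False
  then have ab: "a < b" using ab by simp
  define C where "C = 2 * (Cth (\<alpha>+\<gamma>) * Kw * Kx) * (b - a)"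
  have Cn: "C \<ge> 0" using Cth_bound(2)[OF pos(3)] W X ab unfolding C_def hold_def by auto
  have bnd: "norm (RS (Xi W X) b P - RS (Xi W X) b Q) \<le> C * \<eta> powr (\<alpha>+\<gamma>-1)"
    if "part a b P" "part a b Q" "meshs P b \<eta>" "meshs Q b \<eta>" for P Q \<eta>
    using cauchy_bound[OF W X pos that ab] unfolding C_def by (simp add: algebra_simps)
  have "\<forall>n. \<exists>Q. part a b Q \<and> meshs Q b (1 / (real n + 1))"
    using part_mesh_exists ab by simp
  then obtain Qs where Qs: "\<And>n. part a b (Qs n) \<and> meshs (Qs n) b (1 / (real n + 1))" by metis
  define s where "s n = RS (Xi W X) b (Qs n)" for n
  have mono_mesh: "meshs Q b \<eta>'" if "meshs Q b \<eta>" "\<eta> \<le> \<eta>'" for Q \<eta> \<eta>'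
    using that unfolding meshs_def by force
  have small: "\<exists>N. \<forall>n\<ge>N. 1 / (real n + 1) < \<eta>" if "\<eta> > 0" for \<eta> :: real
  proof -
    obtain N :: nat where N: "1 / \<eta> < real N" using reals_Archimedean2 by blast
    have "1 / (real n + 1) < \<eta>" if "n \<ge> N" for n
    proof -
      have "1 / \<eta> < real n + 1" using N that by linarith
      then show ?thesis using \<open>\<eta> > 0\<close> by (simp add: field_simps)
    qed
    then show ?thesis by blast
  qed
  have "Cauchy s"
  proof (rule metric_CauchyI)
    fix e :: real assume e: "e > 0"
    obtain \<eta> where \<eta>: "\<eta> > 0" "C * \<eta> powr (\<alpha>+\<gamma>-1) < e" using eta_choice[OF e Cn pos(3)] by auto
    obtain N where N: "\<forall>n\<ge>N. 1 / (real n + 1) < \<eta>" using small[OF \<eta>(1)] by blast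
    show "\<exists>M. \<forall>m\<ge>M. \<forall>n\<ge>M. dist (s m) (s n) < e"
    proof (intro exI allI impI)
      fix m n assume mn: "m \<ge> N" "n \<ge> N"
      have "meshs (Qs m) b \<eta>" "meshs (Qs n) b \<eta>"
        using mono_mesh Qs N mn by (meson less_imp_le)+
      then have "norm (s m - s n) \<le> C * \<eta> powr (\<alpha>+\<gamma>-1)" unfolding s_def using bnd Qs by blast
      then show "dist (s m) (s n) < e" using \<eta> by (simp add: dist_norm)
    qed
  qed
  then obtain I where lim: "s \<longlonglongrightarrow> I" using Cauchy_convergent_iff convergent_def by blast
  have "ysi (Xi W X) a b I" unfolding ysi_def
  proof (intro allI impI)
    fix e :: real assume e: "e > 0"
    obtain \<eta> where \<eta>: "\<eta> > 0" "C * \<eta> powr (\<alpha>+\<gamma>-1) < e / 2" using eta_choice[of "e/2" C] e Cn pos(3) by auto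
    obtain N where N: "\<forall>n\<ge>N. 1 / (real n + 1) < \<eta>" using small[OF \<eta>(1)] by blast
    obtain N2 where N2: "\<forall>n\<ge>N2. dist (s n) I < e / 2" using lim e unfolding lim_sequentially by (meson half_gt_zero)
    define n where "n = max N N2"
    have sn: "norm (s n - I) < e / 2" using N2 unfolding n_def dist_norm by simp
    have mn: "meshs (Qs n) b \<eta>" using mono_mesh Qs N unfolding n_def by (meson less_imp_le max.cobounded1)
    show "\<exists>\<eta>>0. \<forall>Q. part a b Q \<and> meshs Q b \<eta> \<longrightarrow> norm (RS (Xi W X) b Q - I) < e"
    proof (intro exI conjI allI impI)
      fix Q assume Q: "part a b Q \<and> meshs Q b \<eta>"
      have "norm (RS (Xi W X) b Q - s n) \<le> C * \<eta> powr (\<alpha>+\<gamma>-1)" unfolding s_def using bnd Q Qs mn by blast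
      then have "norm (RS (Xi W X) b Q - s n) < e / 2" using \<eta> by simp
      then show "norm (RS (Xi W X) b Q - I) < e" using sn norm_triangle_lt[of "RS (Xi W X) b Q - s n" "s n - I" e]
        by simp
    qed (use \<eta> in auto)
  qed
  then show ?thesis by blast
qed

lemma ysi_bound:
  assumes W: "hold Kw \<gamma> a b W" and X: "hold Kx \<alpha> a b X" and pos: "\<alpha> > 0" "\<gamma> > 0" "\<alpha> + \<gamma> > 1"
    and ab: "a \<le> b" and I: "ysi (Xi W X) a b I"
  shows "norm (I - Xi W X a b) \<le> Cth (\<alpha>+\<gamma>) * Kw * Kx * (b - a) powr (\<alpha> + \<gamma>)"
proof (rule field_le_epsilon)
  fix e :: real assume e: "e > 0"
  obtain \<eta> where \<eta>: "\<eta> > 0" "\<forall>Q. part a b Q \<and> meshs Q b \<eta> \<longrightarrow> norm (RS (Xi W X) b Q - I) < e"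
    using I e unfolding ysi_def by blast
  obtain Q where Q: "part a b Q" "meshs Q b \<eta>" using part_mesh_exists[OF ab \<eta>(1)] by blast
  have 1: "norm (RS (Xi W X) b Q - I) < e" using \<eta> Q by blast
  have 2: "norm (RS (Xi W X) b Q - Xi W X a b) \<le> Cth (\<alpha>+\<gamma>) * Kw * Kx * (b - a) powr (\<alpha> + \<gamma>)"
    by (rule Xi_sewing[OF W X pos Q(1)])
  have "norm (I - Xi W X a b) \<le> norm (RS (Xi W X) b Q - I) + norm (RS (Xi W X) b Q - Xi W X a b)"
    by (rule order_trans[OF _ norm_triangle_ineq4]) (simp add: norm_minus_commute)
  then show "norm (I - Xi W X a b) \<le> Cth (\<alpha>+\<gamma>) * Kw * Kx * (b - a) powr (\<alpha> + \<gamma>) + e" using 1 2 by simp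
qed



lemma RS_split:
  assumes Q: "part a b Q" and c: "c \<in> Q"
  shows "RS \<Xi> b Q = RS \<Xi> c (Q \<inter> {a..c}) + RS \<Xi> b (Q \<inter> {c..b})"
proof -
  have fQ: "finite Q" and aQ: "a \<in> Q" and bQ: "b \<in> Q" and Qab: "Q \<subseteq> {a..b}" using Q by (auto simp: part_def)
  have cab: "a \<le> c" "c \<le> b" using c Qab by auto
  consider "c = a" | "c = b" | "a < c \<and> c < b" using cab by linarith
  then show ?thesis
  proof cases
    case 1
    then have "Q \<inter> {a..c} = {a}" "Q \<inter> {c..b} = Q" using aQ Qab by auto
    then show ?thesis using 1 by (simp add: RS_def)
  next
    case 2
    then have "Q \<inter> {c..b} = {b}" "Q \<inter> {a..c} = Q" using bQ Qab by auto
    then show ?thesis using 2 by (simp add: RS_def)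
  next
    case 3
    define P where "P = {a, c, b}"
    have P: "part a b P" using cab aQ unfolding P_def part_def by auto
    have PQ: "P \<subseteq> Q" using aQ bQ c unfolding P_def by auto
    have n1: "nxt P a = c" unfolding P_def by (rule nxt_eqI) (use 3 in auto)
    have n2: "nxt P c = b" unfolding P_def by (rule nxt_eqI) (use 3 in auto)
    have Pb: "P - {b} = {a, c}" using 3 unfolding P_def by auto
    have "RS \<Xi> b Q = (\<Sum>x\<in>{a,c}. RS \<Xi> (nxt P x) (Q \<inter> {x..nxt P x}))"
      using RS_group[OF P Q PQ] unfolding Pb .
    also have "\<dots> = RS \<Xi> c (Q \<inter> {a..c}) + RS \<Xi> b (Q \<inter> {c..b})"
      using 3 n1 n2 by simp
    finally show ?thesis .
  qed
qed

lemma union_part: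
  assumes Q1: "part a c Q1" and Q2: "part c b Q2"
  shows "part a b (Q1 \<union> Q2)" "(Q1 \<union> Q2) \<inter> {a..c} = Q1" "(Q1 \<union> Q2) \<inter> {c..b} = Q2"
    "meshs Q1 c \<eta> \<Longrightarrow> meshs Q2 b \<eta> \<Longrightarrow> meshs (Q1 \<union> Q2) b \<eta>"
proof -
  have h1: "finite Q1" "a \<in> Q1" "c \<in> Q1" "Q1 \<subseteq> {a..c}" using Q1 by (auto simp: part_def)
  have h2: "finite Q2" "c \<in> Q2" "b \<in> Q2" "Q2 \<subseteq> {c..b}" using Q2 by (auto simp: part_def)
  have i1: "\<And>x. x \<in> Q1 \<Longrightarrow> a \<le> x \<and> x \<le> c" using h1 by auto
  have i2: "\<And>x. x \<in> Q2 \<Longrightarrow> c \<le> x \<and> x \<le> b" using h2 by auto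
  have acb: "a \<le> c" "c \<le> b" using i1[OF h1(2)] i2[OF h2(3)] by auto
  show "part a b (Q1 \<union> Q2)" using h1 h2 i1 i2 acb unfolding part_def by force
  show "(Q1 \<union> Q2) \<inter> {a..c} = Q1" using h1 h2 i1 i2 acb by force
  show "(Q1 \<union> Q2) \<inter> {c..b} = Q2" using h1 h2 i1 i2 acb by force
  assume m1: "meshs Q1 c \<eta>" and m2: "meshs Q2 b \<eta>"
  let ?Q = "Q1 \<union> Q2"
  have fQ: "finite ?Q" using h1 h2 by auto
  show "meshs ?Q b \<eta>" unfolding meshs_def
  proof
    fix x assume x: "x \<in> ?Q - {b}"
    show "nxt ?Q x - x < \<eta>"
    proof (cases "x < c")
      case True
      then have x1: "x \<in> Q1 - {c}" using x h2 by auto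
      note nx = nxt_in_part[OF Q1 x1]
      have "nxt ?Q x = nxt Q1 x"
      proof (rule nxt_eqI[OF fQ])
        show "nxt Q1 x \<in> ?Q" "x < nxt Q1 x" using nx by auto
        fix w assume w: "w \<in> ?Q" "x < w"
        show "nxt Q1 x \<le> w"
        proof (cases "w \<in> Q1")
          case True show ?thesis using nxt_props(3)[OF h1(1) True w(2)] by simp
        next
          case False then have "w \<ge> c" using w h2 by auto
          then show ?thesis using nx by auto
        qed
      qed
      then show ?thesis using m1 x1 unfolding meshs_def by auto
    next
      case False
      then have x2: "x \<in> Q2 - {b}" using x i1 h2(2) by (metis DiffD1 DiffD2 DiffI UnE antisym not_less)
      note nx = nxt_in_part[OF Q2 x2]
      have "nxt ?Q x = nxt Q2 x"
      proof (rule nxt_eqI[OF fQ])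
        show "nxt Q2 x \<in> ?Q" "x < nxt Q2 x" using nx by auto
        fix w assume w: "w \<in> ?Q" "x < w"
        then have "w \<in> Q2" using i1 False by force
        then show "nxt Q2 x \<le> w" using nxt_props(3)[OF h2(1) _ w(2)] by auto
      qed
      then show ?thesis using m2 x2 unfolding meshs_def by auto
    qed
  qed
qed

lemma ysi_add:
  assumes ac: "a \<le> c" and cb: "c \<le> b" and I1: "ysi \<Xi> a c I1" and I2: "ysi \<Xi> c b I2" and J: "ysi \<Xi> a b J"
  shows "J = I1 + I2"
proof (rule ccontr)
  assume ne: "J \<noteq> I1 + I2"
  define e where "e = norm (J - (I1 + I2)) / 3"
  have e: "e > 0" using ne unfolding e_def by simp
  obtain \<eta>1 where h1: "\<eta>1 > 0" "\<forall>Q. part a c Q \<and> meshs Q c \<eta>1 \<longrightarrow> norm (RS \<Xi> c Q - I1) < e"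
    using I1 e unfolding ysi_def by blast
  obtain \<eta>2 where h2: "\<eta>2 > 0" "\<forall>Q. part c b Q \<and> meshs Q b \<eta>2 \<longrightarrow> norm (RS \<Xi> b Q - I2) < e"
    using I2 e unfolding ysi_def by blast
  obtain \<eta>3 where h3: "\<eta>3 > 0" "\<forall>Q. part a b Q \<and> meshs Q b \<eta>3 \<longrightarrow> norm (RS \<Xi> b Q - J) < e"
    using J e unfolding ysi_def by blast
  define \<eta> where "\<eta> = min \<eta>1 (min \<eta>2 \<eta>3)"
  have \<eta>: "\<eta> > 0" using h1 h2 h3 unfolding \<eta>_def by auto
  obtain Q1 where Q1: "part a c Q1" "meshs Q1 c \<eta>" using part_mesh_exists[OF ac \<eta>] by blast
  obtain Q2 where Q2: "part c b Q2" "meshs Q2 b \<eta>" using part_mesh_exists[OF cb \<eta>] by blast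
  note U = union_part[OF Q1(1) Q2(1)]
  have mm: "meshs Q \<eta>' \<eta>''" if "meshs Q \<eta>' \<eta>" "\<eta> \<le> \<eta>''" for Q \<eta>' \<eta>''
    using that unfolding meshs_def by force
  have r1: "norm (RS \<Xi> c Q1 - I1) < e" using h1 Q1 mm[OF Q1(2), of \<eta>1] unfolding \<eta>_def by auto
  have r2: "norm (RS \<Xi> b Q2 - I2) < e" using h2 Q2 mm[OF Q2(2), of \<eta>2] unfolding \<eta>_def by auto
  have mQ: "meshs (Q1 \<union> Q2) b \<eta>" using U(4)[OF Q1(2) Q2(2)] .
  have r3: "norm (RS \<Xi> b (Q1 \<union> Q2) - J) < e" using h3 U(1) mm[OF mQ, of \<eta>3] unfolding \<eta>_def by auto
  have cQ: "c \<in> Q1 \<union> Q2" using Q1 by (auto simp: part_def)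
  have sp: "RS \<Xi> b (Q1 \<union> Q2) = RS \<Xi> c Q1 + RS \<Xi> b Q2"
    using RS_split[OF U(1) cQ, of \<Xi>] U(2,3) by simp
  have eqJ: "J - (I1 + I2) = (RS \<Xi> c Q1 - I1) + (RS \<Xi> b Q2 - I2) - (RS \<Xi> b (Q1 \<union> Q2) - J)"
    using sp by (simp add: algebra_simps)
  then have "norm (J - (I1 + I2)) \<le> norm (RS \<Xi> c Q1 - I1) + norm (RS \<Xi> b Q2 - I2) + norm (RS \<Xi> b (Q1 \<union> Q2) - J)"
  proof -
    have "norm ((RS \<Xi> c Q1 - I1) + (RS \<Xi> b Q2 - I2) - (RS \<Xi> b (Q1 \<union> Q2) - J))
        \<le> norm ((RS \<Xi> c Q1 - I1) + (RS \<Xi> b Q2 - I2)) + norm (RS \<Xi> b (Q1 \<union> Q2) - J)"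
      by (rule norm_triangle_ineq4)
    also have "\<dots> \<le> norm (RS \<Xi> c Q1 - I1) + norm (RS \<Xi> b Q2 - I2) + norm (RS \<Xi> b (Q1 \<union> Q2) - J)"
      using norm_triangle_ineq by simp
    finally show ?thesis unfolding eqJ .
  qed
  then have "norm (J - (I1 + I2)) < 3 * e" using r1 r2 r3 by simp
  then show False unfolding e_def by simp
qed

lemma ysi_cong:
  assumes "\<And>x. x \<in> {a..b} \<Longrightarrow> \<Xi> x = \<Xi>' x"
  shows "ysi \<Xi> a b = ysi \<Xi>' a b"
proof -
  have "RS \<Xi> b Q = RS \<Xi>' b Q" if "part a b Q" for Q
    unfolding RS_def using that assms by (intro sum.cong) (auto simp: part_def)
  then show ?thesis unfolding ysi_def by (intro ext) auto
qed

definition yint :: "(real \<Rightarrow> ('v::real_normed_vector \<Rightarrow>\<^sub>L 'u::real_normed_vector)) \<Rightarrow> (real \<Rightarrow> 'v) \<Rightarrow> real \<Rightarrow> real \<Rightarrow> 'u" where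
  "yint W X a b = (SOME I. ysi (Xi W X) a b I)"

lemma yint_cong:
  assumes "\<And>x. x \<in> {a..b} \<Longrightarrow> W x = W' x"
  shows "yint W X a b = yint W' X a b"
proof -
  have "ysi (Xi W X) a b = ysi (Xi W' X) a b"
    by (rule ysi_cong) (use assms in \<open>auto simp: Xi_def fun_eq_iff\<close>)
  then show ?thesis unfolding yint_def by simp
qed

lemma yint_ysi:
  fixes W :: "real \<Rightarrow> ('v::real_normed_vector \<Rightarrow>\<^sub>L 'u::banach)"
  assumes W: "hold Kw \<gamma> 0 T W" and X: "hold Kx \<alpha> 0 T X" and pos: "\<alpha> > 0" "\<gamma> > 0" "\<alpha> + \<gamma> > 1"
    and st: "0 \<le> s" "s \<le> t" "t \<le> T"
  shows "ysi (Xi W X) s t (yint W X s t)"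
proof -
  have "\<exists>I. ysi (Xi W X) s t I"
    by (rule ysi_exists[OF hold_sub[OF W] hold_sub[OF X] pos]) (use st in auto)
  then show ?thesis unfolding yint_def by (rule someI_ex)
qed

lemma yint_zero:
  fixes W :: "real \<Rightarrow> ('v::real_normed_vector \<Rightarrow>\<^sub>L 'u::banach)"
  assumes W: "hold Kw \<gamma> 0 T W" and X: "hold Kx \<alpha> 0 T X" and pos: "\<alpha> > 0" "\<gamma> > 0" "\<alpha> + \<gamma> > 1"
    and s: "0 \<le> s" "s \<le> T"
  shows "yint W X s s = 0"
proof -
  have "ysi (Xi W X) s s 0" unfolding ysi_def using part_single[of s] by (auto simp: RS_def)
  then show ?thesis using ysi_unique[OF order_refl yint_ysi[OF W X pos s(1) order_refl s(2)]] by simp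
qed

lemma yint_add:
  fixes W :: "real \<Rightarrow> ('v::real_normed_vector \<Rightarrow>\<^sub>L 'u::banach)"
  assumes W: "hold Kw \<gamma> 0 T W" and X: "hold Kx \<alpha> 0 T X" and pos: "\<alpha> > 0" "\<gamma> > 0" "\<alpha> + \<gamma> > 1"
    and st: "0 \<le> a" "a \<le> c" "c \<le> b" "b \<le> T"
  shows "yint W X a b = yint W X a c + yint W X c b"
  by (rule ysi_add[OF st(2) st(3)]) (rule yint_ysi[OF W X pos]; use st in auto)+

lemma yint_holder:
  fixes W :: "real \<Rightarrow> ('v::real_normed_vector \<Rightarrow>\<^sub>L 'u::banach)"
  assumes W: "hold Kw \<gamma> 0 T W" and X: "hold Kx \<alpha> 0 T X" and pos: "\<alpha> > 0" "\<gamma> > 0" "\<alpha> + \<gamma> > 1"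
    and T: "T > 0"
  shows "holder_on \<alpha> T (\<lambda>t. yint W X 0 t)"
proof -
  have Kn: "Kw \<ge> 0" "Kx \<ge> 0" using W X by (auto simp: hold_def)
  define B where "B = Cth (\<alpha>+\<gamma>) * Kw * Kx"
  have Bn: "B \<ge> 0" using Cth_bound(2)[OF pos(3)] Kn unfolding B_def by auto
  define M where "M = (norm (W 0) + Kw * T powr \<gamma>) * Kx + B * T powr \<gamma>"
  have one: "norm (yint W X 0 t - yint W X 0 s) \<le> M * \<bar>t - s\<bar> powr \<alpha>"
    if st: "0 \<le> s" "s \<le> t" "t \<le> T" for s t
  proof -
    have "yint W X 0 t = yint W X 0 s + yint W X s t" by (rule yint_add[OF W X pos]) (use st in auto)
    then have eq: "yint W X 0 t - yint W X 0 s = yint W X s t" by simp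
    have Wst: "hold Kw \<gamma> s t W" "hold Kx \<alpha> s t X" using hold_sub[OF W] hold_sub[OF X] st by auto
    have b1: "norm (yint W X s t - Xi W X s t) \<le> B * (t - s) powr (\<alpha> + \<gamma>)"
      unfolding B_def by (rule ysi_bound[OF Wst pos st(2) yint_ysi[OF W X pos st]])
    have Ws: "norm (W s) \<le> norm (W 0) + Kw * T powr \<gamma>"
    proof -
      have "0 \<in> {0..T}" "s \<in> {0..T}" using st by auto
      then have "norm (W s - W 0) \<le> Kw * \<bar>s - 0\<bar> powr \<gamma>" using W unfolding hold_def by blast
      also have "\<dots> \<le> Kw * T powr \<gamma>" using st pos Kn by (intro mult_left_mono powr_mono2) auto
      finally show ?thesis using norm_triangle_ineq2[of "W s" "W 0"] by simp
    qed
    have b2: "norm (Xi W X s t) \<le> (norm (W 0) + Kw * T powr \<gamma>) * (Kx * (t - s) powr \<alpha>)"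
    proof -
      have "norm (Xi W X s t) \<le> norm (W s) * norm (X t - X s)" unfolding Xi_def by (rule norm_blinfun)
      also have "norm (X t - X s) \<le> Kx * \<bar>t - s\<bar> powr \<alpha>"
      proof -
        have "s \<in> {0..T}" "t \<in> {0..T}" using st by auto
        then show ?thesis using X unfolding hold_def by blast
      qed
      then have "norm (W s) * norm (X t - X s) \<le> (norm (W 0) + Kw * T powr \<gamma>) * (Kx * (t - s) powr \<alpha>)"
        using Ws st Kn by (intro mult_mono) auto
      finally show ?thesis .
    qed
    have "(t - s) powr (\<alpha> + \<gamma>) = (t - s) powr \<alpha> * (t - s) powr \<gamma>" by (simp add: powr_add)
    also have "\<dots> \<le> (t - s) powr \<alpha> * T powr \<gamma>" using st pos by (intro mult_left_mono powr_mono2) auto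
    finally have b3: "B * (t - s) powr (\<alpha> + \<gamma>) \<le> B * T powr \<gamma> * (t - s) powr \<alpha>"
      using Bn mult_left_mono by (simp add: mult.assoc mult.commute[of "T powr \<gamma>"]) 
    have "norm (yint W X s t) \<le> norm (Xi W X s t) + norm (yint W X s t - Xi W X s t)"
      by (rule norm_triangle_sub)
    also have "\<dots> \<le> M * (t - s) powr \<alpha>" using b1 b2 b3 unfolding M_def by (simp add: algebra_simps)
    finally show ?thesis using eq st by simp
  qed
  show ?thesis unfolding holder_on_def
  proof (intro exI ballI)
    fix s t assume st: "s \<in> {0..T}" "t \<in> {0..T}"
    show "norm (yint W X 0 t - yint W X 0 s) \<le> M * \<bar>t - s\<bar> powr \<alpha>"
    proof (cases "s \<le> t")
      case True then show ?thesis using one[of s t] st by auto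
    next
      case False
      then have "norm (yint W X 0 s - yint W X 0 t) \<le> M * \<bar>s - t\<bar> powr \<alpha>" using one[of t s] st by auto
      then show ?thesis by (simp add: norm_minus_commute abs_minus_commute)
    qed
  qed
qed



lemma holder_hold:
  assumes "holder_on e T f"
  shows "\<exists>K. hold K e 0 T f"
proof -
  obtain C where C: "\<forall>s\<in>{0..T}. \<forall>t\<in>{0..T}. norm (f t - f s) \<le> C * \<bar>t - s\<bar> powr e"
    using assms unfolding holder_on_def by blast
  have "hold (max C 0) e 0 T f" unfolding hold_def
  proof (intro conjI ballI)
    fix s t assume st: "s \<in> {0..T}" "t \<in> {0..T}"
    have "C * \<bar>t - s\<bar> powr e \<le> max C 0 * \<bar>t - s\<bar> powr e" by (intro mult_right_mono) auto
    then show "norm (f t - f s) \<le> max C 0 * \<bar>t - s\<bar> powr e" using C st by force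
  qed auto
  then show ?thesis by blast
qed

lemma paths_eq:
  assumes "holder_path \<alpha> T Y" "holder_path \<alpha> T Y'" "\<forall>x\<in>{0..T}. Y x = Y' x" "T \<ge> 0"
  shows "Y = Y'"
proof
  fix x
  have c: "max 0 (min T x) \<in> {0..T}" using assms(4) by auto
  have "Y x = Y (max 0 (min T x))" "Y' x = Y' (max 0 (min T x))" using assms(1,2) unfolding holder_path_def by auto
  then show "Y x = Y' x" using assms(3) c by simp
qed

lemma agree_below:
  assumes "holder_path \<alpha> T Y" "holder_path \<alpha> T Y'" "\<forall>x\<in>{0..r}. Y x = Y' x" "0 \<le> r" "z \<le> r"
  shows "Y z = Y' z"
proof -
  have c: "max 0 (min T z) \<in> {0..r}" using assms(4,5) by auto
  have "Y z = Y (max 0 (min T z))" "Y' z = Y' (max 0 (min T z))" using assms(1,2) unfolding holder_path_def by auto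
  then show ?thesis using assms(3) c by simp
qed

theorem theorem6p2:
  fixes F :: "real \<Rightarrow> (real \<Rightarrow> 'u::banach) \<Rightarrow> ('v::banach \<Rightarrow>\<^sub>L 'u)"
    and X :: "real \<Rightarrow> 'v"
    and T \<alpha> \<gamma> \<delta> :: real
    and y0 :: 'u
  assumes "T > 0"
    and "0 < \<alpha>" "\<alpha> \<le> 1" "0 < \<gamma>" "\<gamma> \<le> 1" "\<alpha> + \<gamma> > 1"
    and "\<delta> > 0"
    and "non_anticipating \<alpha> T \<delta> F"
    and "\<forall>Z. holder_path \<alpha> T Z \<longrightarrow> holder_on \<gamma> T (\<lambda>t. F t Z)"
    and "holder_on \<alpha> T X"
  shows "\<exists>!Y. holder_path \<alpha> T Y \<and>
           (\<forall>t\<in>{0..T}. has_young_integral (\<lambda>u. F u Y) X 0 t (Y t - y0))"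
proof -
  note T = assms(1) and pos = assms(2,4,6) and \<delta> = assms(7) and na = assms(8)
  obtain Kx where Kx: "hold Kx \<alpha> 0 T X" using holder_hold[OF assms(10)] by blast
  have KW: "\<exists>K. hold K \<gamma> 0 T (\<lambda>u. F u Z)" if "holder_path \<alpha> T Z" for Z
    using holder_hold assms(9) that by blast
  define cl where "cl t = max 0 (min T t)" for t
  have cl: "cl t \<in> {0..T}" "t \<in> {0..T} \<Longrightarrow> cl t = t" "cl (cl t) = cl t" for t
    using T unfolding cl_def by auto
  define \<Phi> where "\<Phi> Y = (\<lambda>t. y0 + yint (\<lambda>u. F u Y) X 0 (cl t))" for Y
  have Phi_path: "holder_path \<alpha> T (\<Phi> Y)" if Y: "holder_path \<alpha> T Y" for Y
  proof -
    obtain K where K: "hold K \<gamma> 0 T (\<lambda>u. F u Y)" using KW[OF Y] by blast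
    have h: "holder_on \<alpha> T (\<lambda>t. yint (\<lambda>u. F u Y) X 0 t)" by (rule yint_holder[OF K Kx pos T])
    have "holder_on \<alpha> T (\<Phi> Y)"
      using h unfolding holder_on_def \<Phi>_def by (simp add: cl(2))
    moreover have "\<forall>x. \<Phi> Y x = \<Phi> Y (max 0 (min T x))"
      unfolding \<Phi>_def using cl(3) unfolding cl_def by simp
    ultimately show ?thesis unfolding holder_path_def by blast
  qed
  have Phi0: "\<Phi> Y 0 = y0" if Y: "holder_path \<alpha> T Y" for Y
  proof -
    obtain K where K: "hold K \<gamma> 0 T (\<lambda>u. F u Y)" using KW[OF Y] by blast
    have "cl 0 = 0" using T unfolding cl_def by simp
    then show ?thesis unfolding \<Phi>_def using yint_zero[OF K Kx pos order_refl] T by simp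
  qed
  have Fagree: "F u Y = F u Y'"
    if Y: "holder_path \<alpha> T Y" "holder_path \<alpha> T Y'" "\<forall>x\<in>{0..r}. Y x = Y' x" "0 \<le> r"
      and u: "u \<in> {0..T}" "u \<le> r + \<delta>" for Y Y' r u
  proof -
    define m where "m = max (u - \<delta>) 0"
    have "stopped Y m = stopped Y' m" unfolding stopped_def
    proof
      fix x show "Y (min m x) = Y' (min m x)"
        by (rule agree_below[OF Y]) (use u Y(4) in \<open>auto simp: m_def\<close>)
    qed
    then show ?thesis using na Y u unfolding non_anticipating_def m_def by metis
  qed
  have Phi_agree: "\<forall>x\<in>{0..r+\<delta>}. \<Phi> Y x = \<Phi> Y' x"
    if Y: "holder_path \<alpha> T Y" "holder_path \<alpha> T Y'" "\<forall>x\<in>{0..r}. Y x = Y' x" "0 \<le> r" for Y Y' r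
  proof
    fix x assume x: "x \<in> {0..r+\<delta>}"
    have "yint (\<lambda>u. F u Y) X 0 (cl x) = yint (\<lambda>u. F u Y') X 0 (cl x)"
    proof (rule yint_cong)
      fix u assume u: "u \<in> {0..cl x}"
      have "cl x \<le> r + \<delta>" "cl x \<le> T" using x T unfolding cl_def by auto
      then show "F u Y = F u Y'" using Fagree[OF Y, of u] u by auto
    qed
    then show "\<Phi> Y x = \<Phi> Y' x" unfolding \<Phi>_def by simp
  qed
  have char: "(\<forall>t\<in>{0..T}. has_young_integral (\<lambda>u. F u Y) X 0 t (Y t - y0)) \<longleftrightarrow> Y = \<Phi> Y"
    if Y: "holder_path \<alpha> T Y" for Y
  proof -
    obtain K where K: "hold K \<gamma> 0 T (\<lambda>u. F u Y)" using KW[OF Y] by blast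
    have ys: "ysi (Xi (\<lambda>u. F u Y) X) 0 t (yint (\<lambda>u. F u Y) X 0 t)" if "t \<in> {0..T}" for t
      by (rule yint_ysi[OF K Kx pos]) (use that in auto)
    show ?thesis
    proof
      assume H: "\<forall>t\<in>{0..T}. has_young_integral (\<lambda>u. F u Y) X 0 t (Y t - y0)"
      have "\<forall>x\<in>{0..T}. Y x = \<Phi> Y x"
      proof
        fix t assume t: "t \<in> {0..T}"
        have "Y t - y0 = yint (\<lambda>u. F u Y) X 0 t"
          by (rule young_ysi_eq[OF _ H[rule_format, OF t] ys[OF t]]) (use t in auto)
        then show "Y t = \<Phi> Y t" unfolding \<Phi>_def using cl(2)[OF t] by (simp add: algebra_simps)
      qed
      then show "Y = \<Phi> Y" by (rule paths_eq[OF Y Phi_path[OF Y] _ ]) (use T in auto)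
    next
      assume H: "Y = \<Phi> Y"
      show "\<forall>t\<in>{0..T}. has_young_integral (\<lambda>u. F u Y) X 0 t (Y t - y0)"
      proof
        fix t assume t: "t \<in> {0..T}"
        have "Y t - y0 = yint (\<lambda>u. F u Y) X 0 t"
          using H cl(2)[OF t] unfolding \<Phi>_def by (metis add_diff_cancel_left')
        then show "has_young_integral (\<lambda>u. F u Y) X 0 t (Y t - y0)"
          using ysi_to_young[OF ys[OF t]] by simp
      qed
    qed
  qed
  obtain N :: nat where N: "T / \<delta> < real N" using reals_Archimedean2 by blast
  have NT: "T \<le> real N * \<delta>" using N \<delta> by (simp add: field_simps)
  define Ys where "Ys k = (\<Phi> ^^ k) (\<lambda>_. y0)" for k
  have YsS: "Ys (Suc k) = \<Phi> (Ys k)" for k unfolding Ys_def by simp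
  have const: "holder_path \<alpha> T (\<lambda>_. y0)" unfolding holder_path_def holder_on_def by (auto intro: exI[of _ 0])
  have Ys0: "Ys 0 = (\<lambda>_. y0)" unfolding Ys_def by simp
  have Ysp: "holder_path \<alpha> T (Ys k)" for k
  proof (induct k)
    case 0 show ?case unfolding Ys0 by (rule const)
  next
    case (Suc k) show ?case unfolding YsS by (rule Phi_path[OF Suc])
  qed
  have Ysa: "\<forall>x\<in>{0..real k * \<delta>}. Ys k x = Ys (Suc k) x" for k
  proof (induct k)
    case 0
    have "Ys (Suc 0) 0 = y0" unfolding YsS using Phi0[OF Ysp] by simp
    moreover have "Ys 0 0 = y0" unfolding Ys0 by simp
    ultimately show ?case by simp
  next
    case (Suc k)
    have "\<forall>x\<in>{0..real k * \<delta> + \<delta>}. \<Phi> (Ys k) x = \<Phi> (Ys (Suc k)) x"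
      by (rule Phi_agree[OF Ysp Ysp Suc]) (use \<delta> in auto)
    then show ?case unfolding YsS[of "Suc k"] YsS[of k] by (simp add: algebra_simps)
  qed
  have fix1: "Ys N = \<Phi> (Ys N)"
    unfolding YsS[symmetric] by (rule paths_eq[OF Ysp Ysp]) (use Ysa[of N] NT T in auto)
  have uniq: "Y = Y'" if Y: "holder_path \<alpha> T Y" "Y = \<Phi> Y" and Y': "holder_path \<alpha> T Y'" "Y' = \<Phi> Y'" for Y Y'
  proof -
    have "\<forall>x\<in>{0..real k * \<delta>}. Y x = Y' x" for k
    proof (induct k)
      case 0
      have "Y 0 = y0" using Phi0[OF Y(1)] Y(2) by simp
      moreover have "Y' 0 = y0" using Phi0[OF Y'(1)] Y'(2) by simp
      ultimately show ?case by simp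
    next
      case (Suc k)
      have "\<forall>x\<in>{0..real k * \<delta> + \<delta>}. \<Phi> Y x = \<Phi> Y' x"
        by (rule Phi_agree[OF Y(1) Y'(1) Suc]) (use \<delta> in auto)
      then show ?case using Y(2) Y'(2) by (simp add: algebra_simps)
    qed
    then have "\<forall>x\<in>{0..real N * \<delta>}. Y x = Y' x" by blast
    then show ?thesis by (intro paths_eq[OF Y(1) Y'(1)]) (use NT T in auto)
  qed
  show ?thesis
  proof (rule ex1I[of _ "Ys N"])
    show "holder_path \<alpha> T (Ys N) \<and> (\<forall>t\<in>{0..T}. has_young_integral (\<lambda>u. F u (Ys N)) X 0 t (Ys N t - y0))"
      using Ysp[of N] char[OF Ysp[of N]] fix1 by simp
    fix Y assume H: "holder_path \<alpha> T Y \<and> (\<forall>t\<in>{0..T}. has_young_integral (\<lambda>u. F u Y) X 0 t (Y t - y0))"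
    then have "Y = \<Phi> Y" using char[of Y] by simp
    then show "Y = Ys N" using uniq[of Y "Ys N"] H fix1 Ysp[of N] by simp
  qed
qed


end
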